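(* Let $n\ge 6$ be even and let $L$ be a Latin square of order $n$ with inner distance $\frac n2-1$. If some row of $L$ has extended difference row equal to Row A, then $L$ is a row product.
   Context: Symbols are $[1,n]$; $\mathrm{dist}(a,b)$ is the minimum of the residues of $a-b$ and $b-a$ mod $n$ (in $[0,n-1]$). A Latin square of order $n$ is an $n\times n$ matrix $(m_{i,j})$ over $[1,n]$ with each symbol exactly once per row and column; its inner distance is the minimum of $\mathrm{dist}$ over symbols in horizontally or vertically adjacent cells. For a Latin row $(s_1,\dots,s_n)$, with $h_j\in[0,n-1]$, $h_j\equiv s_{j+1}-s_j\pmod n$ ($1\le j\le n-1$) and $h_n\equiv s_1-s_n\pmod n$, its difference row is $(h_1,\dots,h_{n-1})$ and its extended difference row is $(\epsilon_1,\dots,\epsilon_{n-1},h)$ with $\epsilon_j=h_j-\frac n2$, $h=h_n-\frac n2$ (integers). Row A is the extended difference row $(0,1,0,1,\dots,1,0,1-\frac n2)$, whose first $n-1$ entries alternate $0,1$ starting and ending with $0$. For $L$, $H$ is the $n\times(n-1)$ matrix with $h_{i,j}\equiv m_{i,j+1}-m_{i,j}$ and $V$ the $(n-1)\times n$ matrix with $v_{i,j}\equiv m_{i+1,j}-m_{i,j}$ (mod $n$). A row product is a Latin square obtained by adding a constant mod $n$ to all entries of $\mathrm{prod}(d,d')$, the $n\times n$ matrix with $1$ in cell $(1,1)$ whose $H$ has every row equal to a difference row $d$ and whose $V$ has every column equal to a difference row $d'$. *)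

theory Defs
  imports Main
begin

text \<open>Conventions: rows/columns indexed by 1..n; symbols are integers in 1..n.
A matrix is a function M :: nat => nat => int, entry (i,j) = M i j.\<close>

definition cdist :: "nat \<Rightarrow> int \<Rightarrow> int \<Rightarrow> int" where
  "cdist n a b = min ((a - b) mod int n) ((b - a) mod int n)"

definition latin_row :: "nat \<Rightarrow> (nat \<Rightarrow> int) \<Rightarrow> bool" where
  "latin_row n s \<longleftrightarrow> bij_betw s {1..n} {1..int n}"

definition latin_square :: "nat \<Rightarrow> (nat \<Rightarrow> nat \<Rightarrow> int) \<Rightarrow> bool" where
  "latin_square n M \<longleftrightarrow>
     (\<forall>i\<in>{1..n}. bij_betw (\<lambda>j. M i j) {1..n} {1..int n}) \<and>
     (\<forall>j\<in>{1..n}. bij_betw (\<lambda>i. M i j) {1..n} {1..int n})"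

definition inner_distance :: "nat \<Rightarrow> (nat \<Rightarrow> nat \<Rightarrow> int) \<Rightarrow> int" where
  "inner_distance n M = Min
     ({cdist n (M i j) (M i (j+1)) | i j. i \<in> {1..n} \<and> j \<in> {1..n-1}} \<union>
      {cdist n (M i j) (M (i+1) j) | i j. i \<in> {1..n-1} \<and> j \<in> {1..n}})"

definition diff_row :: "nat \<Rightarrow> (nat \<Rightarrow> int) \<Rightarrow> nat \<Rightarrow> int" where
  "diff_row n s j = (s (j+1) - s j) mod int n"

definition ext_diff_row :: "nat \<Rightarrow> (nat \<Rightarrow> int) \<Rightarrow> nat \<Rightarrow> int" where
  "ext_diff_row n s j =
     (if j < n then diff_row n s j - int (n div 2)
      else (s 1 - s n) mod int n - int (n div 2))"

definition rowA :: "nat \<Rightarrow> nat \<Rightarrow> int" where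
  "rowA n j = (if j = n then 1 - int (n div 2) else if even j then 1 else 0)"

definition is_difference_row :: "nat \<Rightarrow> (nat \<Rightarrow> int) \<Rightarrow> bool" where
  "is_difference_row n d \<longleftrightarrow>
     (\<exists>s. latin_row n s \<and> (\<forall>j\<in>{1..n-1}. d j = diff_row n s j))"

text \<open>prod(d,d'): 1 at (1,1), every row of H equals d, every column of V equals d'.\<close>
definition prod_mat :: "nat \<Rightarrow> (nat \<Rightarrow> int) \<Rightarrow> (nat \<Rightarrow> int) \<Rightarrow> nat \<Rightarrow> nat \<Rightarrow> int" where
  "prod_mat n d d' i j = ((\<Sum>k\<in>{1..<i}. d' k) + (\<Sum>k\<in>{1..<j}. d k)) mod int n + 1"

definition row_product :: "nat \<Rightarrow> (nat \<Rightarrow> nat \<Rightarrow> int) \<Rightarrow> bool" where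
  "row_product n M \<longleftrightarrow> latin_square n M \<and>
     (\<exists>d d' c. is_difference_row n d \<and> is_difference_row n d' \<and>
        (\<forall>i\<in>{1..n}. \<forall>j\<in>{1..n}. M i j = (prod_mat n d d' i j - 1 + c) mod int n + 1))"

end

theory Submission
  imports Defs
begin


lemma dvd_small:
  fixes N k :: int
  assumes "N dvd k" "\<bar>k\<bar> < N"
  shows "k = 0"
  using assms(1,2) dvd_imp_le_int by force

lemma dvd_mod_diff: "(N::int) dvd (a mod N - a)"
  by (metis mod_eq_dvd_iff mod_mod_trivial)

lemma dvd_swap: "(N::int) dvd (a - b) \<Longrightarrow> N dvd (b - a)"
  by (simp add: dvd_diff_commute)

lemma dlemma:
  fixes m :: int and \<delta> :: "int \<Rightarrow> int"
  assumes m3: "m \<ge> 3"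
    and per: "\<And>a b. (2*m) dvd (a - b) \<Longrightarrow> \<delta> a = \<delta> b"
    and rng: "\<And>a. \<delta> a = -1 \<or> \<delta> a = 0 \<or> \<delta> a = 1"
    and surj: "\<And>q. \<exists>p. (2*m) dvd (p + \<delta> p - q)"
    and o1: "\<And>k. 0 \<le> k \<Longrightarrow> k < m \<Longrightarrow> \<bar>\<delta> k - \<delta> (m+k)\<bar> \<le> 1"
    and o2: "\<And>k. 0 \<le> k \<Longrightarrow> k \<le> m-2 \<Longrightarrow> \<delta> (m+k+1) \<le> \<delta> k"
    and nc: "\<delta> a0 \<noteq> \<delta> b0"
  shows "\<delta> 0 = 0 \<and> (\<forall>k. 1 \<le> k \<and> k < m \<longrightarrow> \<delta>(m+k) \<noteq> 1)
    \<and> (\<forall>k. 0 \<le> k \<and> k \<le> m-3 \<longrightarrow> \<delta> k \<noteq> 1)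
    \<and> (\<forall>k. 2 \<le> k \<and> k < m \<longrightarrow> \<delta> (m+k) \<noteq> -1)
    \<and> (\<forall>k. 0 \<le> k \<and> k \<le> m-2 \<longrightarrow> \<delta> k \<noteq> -1)
    \<and> (\<forall>v. \<delta> v = -1 \<longrightarrow> \<delta> (v-1) = 1) \<and> (\<forall>v. \<delta> v = 1 \<longrightarrow> \<delta> (v+1) = -1)
    \<and> (\<exists>v. \<delta> v = 1) \<and> (\<exists>v. \<delta> v = -1)"
proof -
  have step: "\<delta> (v-1) = 1 \<or> \<delta> (v+1) = -1" if "\<delta> v \<noteq> 0" for v
  proof -
    obtain p where p: "(2*m) dvd (p + \<delta> p - v)" using surj by blast
    consider "\<delta> p = -1" | "\<delta> p = 0" | "\<delta> p = 1" using rng by blast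
    then show ?thesis
    proof cases
      case 1
      then have "(2*m) dvd (p - (v+1))" using p by (simp add: algebra_simps)
      then have "\<delta> p = \<delta> (v+1)" using per by blast
      then show ?thesis using 1 by simp
    next
      case 2
      then have "(2*m) dvd (p - v)" using p by simp
      then have "\<delta> p = \<delta> v" using per by blast
      then show ?thesis using 2 that by simp
    next
      case 3
      then have "(2*m) dvd (p - (v-1))" using p by (simp add: algebra_simps)
      then have "\<delta> p = \<delta> (v-1)" using per by blast
      then show ?thesis using 3 by simp
    qed
  qed
  have allm: "\<delta> w = -1" if "\<delta> v = -1" "\<delta> (v-1) \<noteq> 1" for v w
  proof -
    have "\<delta> (v + int k) = -1 \<and> \<delta> (v + int k - 1) \<noteq> 1" for k :: nat
    proof (induction k)
      case 0 then show ?case using that by simp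
    next
      case (Suc k)
      then have "\<delta> (v + int k + 1) = -1" using step[of "v + int k"] by force
      then show ?case using Suc by (simp add: algebra_simps)
    qed
    from this[of "nat ((w - v) mod (2*m))"] have h1: "\<delta> (v + (w - v) mod (2*m)) = -1"
      using m3 by simp
    have h2: "(2*m) dvd ((v + (w - v) mod (2*m)) - w)"
      using dvd_mod_diff[of "2*m" "w-v"] by (simp add: algebra_simps)
    show ?thesis using per[OF h2] h1 by simp
  qed
  have allp: "\<delta> w = 1" if "\<delta> v = 1" "\<delta> (v+1) \<noteq> -1" for v w
  proof -
    have "\<delta> (v - int k) = 1 \<and> \<delta> (v - int k + 1) \<noteq> -1" for k :: nat
    proof (induction k)
      case 0 then show ?case using that by simp
    next
      case (Suc k)
      then have "\<delta> (v - int k - 1) = 1" using step[of "v - int k"] by force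
      then show ?case using Suc by (simp add: algebra_simps)
    qed
    from this[of "nat ((v - w) mod (2*m))"] have h1: "\<delta> (v - (v - w) mod (2*m)) = 1"
      using m3 by simp
    have h2: "(2*m) dvd ((v - (v - w) mod (2*m)) - w)"
      using dvd_mod_diff[of "2*m" "v-w"] dvd_minus_iff by (smt (verit))
    show ?thesis using per[OF h2] h1 by simp
  qed
  have D1: "\<delta> (v-1) = 1" if "\<delta> v = -1" for v
    using allm[OF that, of a0] allm[OF that, of b0] nc by (cases "\<delta> (v-1) = 1") auto
  have D2: "\<delta> (v+1) = -1" if "\<delta> v = 1" for v
    using allp[OF that, of a0] allp[OF that, of b0] nc by (cases "\<delta> (v+1) = -1") auto
  have F1: False if "0 \<le> k" "k \<le> m-2" "\<delta> k = -1" for k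
  proof -
    have "\<delta> (m+k+1) \<le> -1" using o2[OF that(1,2)] that(3) by simp
    then have "\<delta> (m+k+1) = -1" using rng[of "m+k+1"] by linarith
    then have "\<delta> (m+k) = 1" using D1[of "m+k+1"] by simp
    then show False using o1[of k] that by simp
  qed
  have F2: False if "1 \<le> j" "j \<le> m-1" "\<delta> (m+j) = 1" for j
  proof -
    have "\<delta> (m+(j-1)+1) \<le> \<delta> (j-1)" using o2[of "j-1"] that by simp
    then have "\<delta> (j-1) = 1" using that rng[of "j-1"] by simp
    then have "\<delta> j = -1" using D2[of "j-1"] by simp
    then have "\<not> (j \<le> m-2)" using F1[of j] that by auto
    then have "j = m-1" using that by linarith
    then have e: "m + j = 2*m-1" by linarith
    have "\<delta> (2*m-1) = 1" using that(3) unfolding e .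
    then have "\<delta> (2*m) = -1" using D2[of "2*m-1"] by simp
    moreover have "\<delta> (2*m) = \<delta> 0" using per[of "2*m" 0] by simp
    ultimately show False using F1[of 0] m3 by simp
  qed
  have F3: False if "2 \<le> j" "j \<le> m-1" "\<delta> (m+j) = -1" for j
    using D1[of "m+j"] F2[of "j-1"] that by (simp add: algebra_simps)
  have F4: False if "0 \<le> k" "k \<le> m-3" "\<delta> k = 1" for k
    using D2[of k] F1[of "k+1"] that by simp
  have d0: "\<delta> 0 = 0" using F1[of 0] F4[of 0] rng[of 0] m3 by force
  have ex: "\<exists>v. \<delta> v \<noteq> 0" using nc by (cases "\<delta> a0 = 0") auto
  then obtain v where v: "\<delta> v \<noteq> 0" by blast
  have E: "(\<exists>v. \<delta> v = 1) \<and> (\<exists>v. \<delta> v = -1)"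
  proof (cases "\<delta> v = 1")
    case True then show ?thesis using D2[of v] by blast
  next
    case False then have "\<delta> v = -1" using v rng[of v] by simp
    then show ?thesis using D1[of v] by blast
  qed
  have G2: "\<forall>k. 1 \<le> k \<and> k < m \<longrightarrow> \<delta>(m+k) \<noteq> 1"
  proof (intro allI impI)
    fix k assume "1 \<le> k \<and> k < m" then show "\<delta>(m+k) \<noteq> 1" using F2[of k] by auto
  qed
  have G4: "\<forall>k. 0 \<le> k \<and> k \<le> m-3 \<longrightarrow> \<delta> k \<noteq> 1"
  proof (intro allI impI)
    fix k assume "0 \<le> k \<and> k \<le> m-3" then show "\<delta> k \<noteq> 1" using F4[of k] by auto
  qed
  have G3: "\<forall>k. 2 \<le> k \<and> k < m \<longrightarrow> \<delta> (m+k) \<noteq> -1"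
  proof (intro allI impI)
    fix k assume "2 \<le> k \<and> k < m" then show "\<delta>(m+k) \<noteq> -1" using F3[of k] by auto
  qed
  have G1: "\<forall>k. 0 \<le> k \<and> k \<le> m-2 \<longrightarrow> \<delta> k \<noteq> -1"
  proof (intro allI impI)
    fix k assume "0 \<le> k \<and> k \<le> m-2" then show "\<delta> k \<noteq> -1" using F1[of k] by auto
  qed
  have G5: "\<forall>v. \<delta> v = -1 \<longrightarrow> \<delta> (v-1) = 1" using D1 by blast
  have G6: "\<forall>v. \<delta> v = 1 \<longrightarrow> \<delta> (v+1) = -1" using D2 by blast
  show ?thesis
    apply (intro conjI)
    apply (rule d0) apply (rule G2) apply (rule G4) apply (rule G3) apply (rule G1)
    apply (rule G5) apply (rule G6) using E apply blast using E apply blast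
    done
qed

definition rho :: "nat \<Rightarrow> nat \<Rightarrow> int" where
  "rho m j = int ((j-1) div 2) + (if even j then int m else 0)"

lemma rho_odd: "rho m (2*k+1) = int k"
  unfolding rho_def by simp

lemma rho_even: "rho m (2*k+2) = int k + int m"
  unfolding rho_def by simp

lemma dvd_comb3:
  fixes N :: int
  assumes "N dvd a" "N dvd b" "N dvd c" "E = a - b + c"
  shows "N dvd E"
  using assms by (simp add: dvd_add dvd_diff)

lemma xstep:
  fixes n m :: nat and T x :: "nat \<Rightarrow> int" and s :: int
  assumes nm: "n = 2*m" "m \<ge> 3"
    and Tf: "\<forall>j\<in>{1..n}. int n dvd (T j - s - rho m j - int m - x j)"
    and xr: "\<forall>j\<in>{1..n}. x j = -1 \<or> x j = 0 \<or> x j = 1"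
    and Th: "\<forall>j\<in>{1..n-1}. \<exists>e. (e = -1 \<or> e = 0 \<or> e = 1) \<and> int n dvd (T (j+1) - T j - int m - e)"
  shows "(\<forall>k<m. \<bar>x (2*k+2) - x (2*k+1)\<bar> \<le> 1) \<and> (\<forall>k. k+2 \<le> m \<longrightarrow> x (2*k+3) \<le> x (2*k+2))"
proof (intro conjI allI impI)
  fix k assume k: "k < m"
  have j1: "2*k+1 \<in> {1..n-1}" "2*k+1 \<in> {1..n}" "2*k+2 \<in> {1..n}" using k nm by auto
  obtain e where e: "e = -1 \<or> e = 0 \<or> e = 1" "int n dvd (T (2*k+1+1) - T (2*k+1) - int m - e)"
    using Th j1(1) by blast
  have h1: "int n dvd (T (2*k+2) - s - rho m (2*k+2) - int m - x (2*k+2))" using Tf j1 by blast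
  have h2: "int n dvd (T (2*k+1) - s - rho m (2*k+1) - int m - x (2*k+1))" using Tf j1 by blast
  have "int n dvd (x (2*k+2) - x (2*k+1) - e)"
    by (rule dvd_comb3[OF e(2) h1 h2]) (simp add: rho_def)
  moreover have "\<bar>x (2*k+2) - x (2*k+1) - e\<bar> < int n"
  proof -
    have a1: "x (2*k+1) = -1 \<or> x (2*k+1) = 0 \<or> x (2*k+1) = 1" using xr j1 by blast
    have a2: "x (2*k+2) = -1 \<or> x (2*k+2) = 0 \<or> x (2*k+2) = 1" using xr j1 by blast
    show ?thesis using a1 a2 e(1) nm by auto
  qed
  ultimately have "x (2*k+2) - x (2*k+1) - e = 0" by (rule dvd_small)
  then show "\<bar>x (2*k+2) - x (2*k+1)\<bar> \<le> 1" using e(1) by auto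
next
  fix k assume k: "k+2 \<le> m"
  have j1: "2*k+2 \<in> {1..n-1}" "2*k+3 \<in> {1..n}" "2*k+2 \<in> {1..n}" using k nm by auto
  obtain e where e: "e = -1 \<or> e = 0 \<or> e = 1" "int n dvd (T (2*k+2+1) - T (2*k+2) - int m - e)"
    using Th j1(1) by blast
  have h1: "int n dvd (T (2*k+3) - s - rho m (2*k+3) - int m - x (2*k+3))" using Tf j1 by blast
  have h2: "int n dvd (T (2*k+2) - s - rho m (2*k+2) - int m - x (2*k+2))" using Tf j1 by blast
  have "int n dvd (x (2*k+3) - x (2*k+2) - e + 1 - int n)"
    by (rule dvd_comb3[OF e(2) h1 h2]) (simp add: rho_def nm numeral_3_eq_3)
  then have "int n dvd (x (2*k+3) - x (2*k+2) - e + 1)"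
    using dvd_add[OF _ dvd_refl[of "int n"]] by fastforce
  moreover have "\<bar>x (2*k+3) - x (2*k+2) - e + 1\<bar> < int n"
  proof -
    have a1: "x (2*k+3) = -1 \<or> x (2*k+3) = 0 \<or> x (2*k+3) = 1" using xr j1 by blast
    have a2: "x (2*k+2) = -1 \<or> x (2*k+2) = 0 \<or> x (2*k+2) = 1" using xr j1 by blast
    show ?thesis using a1 a2 e(1) nm by auto
  qed
  ultimately have "x (2*k+3) - x (2*k+2) - e + 1 = 0" by (rule dvd_small)
  then show "x (2*k+3) \<le> x (2*k+2)" using e(1) by auto
qed

lemma jsplit:
  fixes j n m :: nat
  assumes "j \<in> {1..n}" "n = 2*m"
  shows "(\<exists>k<m. j = 2*k+1) \<or> (\<exists>k<m. j = 2*k+2)"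
proof (cases "odd j")
  case True
  then have "j = 2*(j div 2)+1" by simp
  moreover have "j < 2*m" using assms True by (cases "j = 2*m") auto
  then have "j div 2 < m" by (simp add: div_less_iff_less_mult)
  ultimately show ?thesis by blast
next
  case False
  then have "j = 2*((j-2) div 2)+2" using assms by auto
  moreover have "(j-2) div 2 < m" using assms by auto
  ultimately show ?thesis by blast
qed

lemma classify:
  fixes n m :: nat and T x :: "nat \<Rightarrow> int" and s :: int
  assumes nm: "n = 2*m" "m \<ge> 3"
    and Tf: "\<forall>j\<in>{1..n}. int n dvd (T j - s - rho m j - int m - x j)"
    and xr: "\<forall>j\<in>{1..n}. x j = -1 \<or> x j = 0 \<or> x j = 1"
    and Th: "\<forall>j\<in>{1..n-1}. \<exists>e. (e = -1 \<or> e = 0 \<or> e = 1) \<and> int n dvd (T (j+1) - T j - int m - e)"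
    and Tsurj: "\<forall>q. \<exists>j\<in>{1..n}. int n dvd (T j - q)"
    and nc: "j0 \<in> {1..n}" "x j0 \<noteq> x 1"
  shows "x 2 = 0 \<and> (\<exists>j\<in>{1..n}. x j = 1) \<and> (\<exists>j\<in>{1..n}. x j = -1)
    \<and> (\<forall>j\<in>{1..n}. x j = 1 \<longrightarrow> j = 1 \<or> j = n-2 \<or> j = n)
    \<and> (\<forall>j\<in>{1..n}. x j = -1 \<longrightarrow> j = 1 \<or> j = 3 \<or> j = n)
    \<and> (x 1 = 1 \<longrightarrow> x 3 = -1) \<and> (x 3 = -1 \<longrightarrow> x 1 = 1)
    \<and> (x 1 = -1 \<longrightarrow> x n = 1) \<and> (x n = 1 \<longrightarrow> x 1 = -1)
    \<and> (x (n-2) = 1 \<longrightarrow> x n = -1) \<and> (x n = -1 \<longrightarrow> x (n-2) = 1)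
    \<and> (\<forall>k<m. \<bar>x (2*k+2) - x (2*k+1)\<bar> \<le> 1)"
proof -
  have ord: "(\<forall>k<m. \<bar>x (2*k+2) - x (2*k+1)\<bar> \<le> 1) \<and> (\<forall>k. k+2 \<le> m \<longrightarrow> x (2*k+3) \<le> x (2*k+2))"
    by (rule xstep[OF nm Tf xr Th])
  define \<delta> where "\<delta> v = (let w = v mod int n in if w < int m then x (nat (2*w+2)) else x (nat (2*(w - int m)+1)))" for v
  have dA: "\<delta> (int k) = x (2*k+2)" if "k < m" for k
  proof -
    have "int k mod int n = int k" using that nm by simp
    then show ?thesis unfolding \<delta>_def using that by (simp add: Let_def nat_add_distrib nat_mult_distrib)
  qed
  have dB: "\<delta> (int m + int k) = x (2*k+1)" if "k < m" for k
  proof -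
    have "(int m + int k) mod int n = int m + int k" using that nm by simp
    then show ?thesis unfolding \<delta>_def using that by (simp add: Let_def nat_add_distrib nat_mult_distrib)
  qed
  have dper: "\<delta> a = \<delta> b" if "(2 * int m) dvd (a - b)" for a b
  proof -
    have "a mod int n = b mod int n" using that nm by (simp add: mod_eq_dvd_iff)
    then show ?thesis unfolding \<delta>_def by simp
  qed
  have dcol: "\<exists>j\<in>{1..n}. \<delta> v = x j" for v
  proof -
    define w where "w = v mod int n"
    have w: "0 \<le> w" "w < int n" using nm unfolding w_def by auto
    show ?thesis
    proof (cases "w < int m")
      case True
      then have "\<delta> v = x (nat (2*w+2))" unfolding \<delta>_def w_def[symmetric] by simp
      moreover have "nat (2*w+2) \<in> {1..n}" using w True nm by auto
      ultimately show ?thesis by blast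
    next
      case False
      then have "\<delta> v = x (nat (2*(w - int m)+1))" unfolding \<delta>_def w_def[symmetric] by simp
      moreover have "nat (2*(w - int m)+1) \<in> {1..n}" using w False nm by auto
      ultimately show ?thesis by blast
    qed
  qed
  have drng: "\<delta> a = -1 \<or> \<delta> a = 0 \<or> \<delta> a = 1" for a
    using dcol[of a] xr by metis
  have slot: "\<exists>p. \<delta> p = x j \<and> int n dvd (T j - s - p - x j)" if jj: "j \<in> {1..n}" for j
  proof -
    have tf: "int n dvd (T j - s - rho m j - int m - x j)" using Tf jj by blast
    consider (o) k where "k < m" "j = 2*k+1" | (e) k where "k < m" "j = 2*k+2"
      using jsplit[OF jj nm(1)] by blast
    then show ?thesis
    proof cases
      case o
      then have "\<delta> (int m + int k) = x j" using dB by simp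
      moreover have "int n dvd (T j - s - (int m + int k) - x j)"
        using tf o by (simp add: rho_def algebra_simps)
      ultimately show ?thesis by blast
    next
      case e
      then have "\<delta> (int k) = x j" using dA by simp
      moreover have "int n dvd (T j - s - int k - x j)"
      proof -
        have eq: "T j - s - int k - x j = (T j - s - rho m j - int m - x j) + int n"
          using e nm by (simp add: rho_def algebra_simps)
        show ?thesis unfolding eq by (rule dvd_add[OF tf dvd_refl])
      qed
      ultimately show ?thesis by blast
    qed
  qed
  have dsurj: "\<exists>p. (2 * int m) dvd (p + \<delta> p - q)" for q
  proof -
    obtain j where j: "j \<in> {1..n}" "int n dvd (T j - (s + q))" using Tsurj by blast
    obtain p where p: "\<delta> p = x j" "int n dvd (T j - s - p - x j)" using slot[OF j(1)] by blast
    have "int n dvd ((T j - (s + q)) - (T j - s - p - x j))" using j(2) p(2) by (rule dvd_diff)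
    then have "int n dvd (p + \<delta> p - q)" using p(1) by (simp add: algebra_simps)
    then show ?thesis using nm by auto
  qed
  have do1: "\<bar>\<delta> k - \<delta> (int m + k)\<bar> \<le> 1" if "0 \<le> k" "k < int m" for k
  proof -
    have kk: "nat k < m" using that by linarith
    have "\<delta> (int (nat k)) = x (2*nat k+2)" "\<delta> (int m + int (nat k)) = x (2*nat k+1)"
      using dA[OF kk] dB[OF kk] by auto
    then have "\<delta> k = x (2*nat k+2)" "\<delta> (int m + k) = x (2*nat k+1)" using that by auto
    then show ?thesis using ord kk by auto
  qed
  have do2: "\<delta> (int m + k + 1) \<le> \<delta> k" if "0 \<le> k" "k \<le> int m - 2" for k
  proof -
    have kk: "nat k < m" "nat k + 1 < m" "nat k + 2 \<le> m" using that by linarith+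
    have "\<delta> (int (nat k)) = x (2*nat k+2)" "\<delta> (int m + int (nat k+1)) = x (2*(nat k+1)+1)"
      using dA[OF kk(1)] dB[OF kk(2)] by auto
    moreover have "x (2*nat k+3) \<le> x (2*nat k+2)" using ord kk(3) by auto
    ultimately show ?thesis using that by (simp add: algebra_simps numeral_3_eq_3)
  qed
  obtain a0 where a0: "\<delta> a0 = x j0" using slot[OF nc(1)] by blast
  have b0: "\<delta> (int m) = x 1" using dB[of 0] nm by simp
  have D: "\<delta> 0 = 0 \<and> (\<forall>k. 1 \<le> k \<and> k < int m \<longrightarrow> \<delta>(int m+k) \<noteq> 1)
    \<and> (\<forall>k. 0 \<le> k \<and> k \<le> int m-3 \<longrightarrow> \<delta> k \<noteq> 1)
    \<and> (\<forall>k. 2 \<le> k \<and> k < int m \<longrightarrow> \<delta> (int m+k) \<noteq> -1)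
    \<and> (\<forall>k. 0 \<le> k \<and> k \<le> int m-2 \<longrightarrow> \<delta> k \<noteq> -1)
    \<and> (\<forall>v. \<delta> v = -1 \<longrightarrow> \<delta> (v-1) = 1) \<and> (\<forall>v. \<delta> v = 1 \<longrightarrow> \<delta> (v+1) = -1)
    \<and> (\<exists>v. \<delta> v = 1) \<and> (\<exists>v. \<delta> v = -1)"
    apply (rule dlemma[of "int m" \<delta> a0 "int m"])
    using nm apply simp
    using dper apply blast
    using drng apply blast
    using dsurj apply blast
    using do1 apply blast
    using do2 apply blast
    using a0 b0 nc(2) apply simp
    done
  then have D0: "\<delta> 0 = 0"
    and D2: "\<forall>k. 1 \<le> k \<and> k < int m \<longrightarrow> \<delta>(int m+k) \<noteq> 1"
    and D3: "\<forall>k. 0 \<le> k \<and> k \<le> int m-3 \<longrightarrow> \<delta> k \<noteq> 1"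
    and D4: "\<forall>k. 2 \<le> k \<and> k < int m \<longrightarrow> \<delta> (int m+k) \<noteq> -1"
    and D5: "\<forall>k. 0 \<le> k \<and> k \<le> int m-2 \<longrightarrow> \<delta> k \<noteq> -1"
    and D6: "\<forall>v. \<delta> v = -1 \<longrightarrow> \<delta> (v-1) = 1"
    and D7: "\<forall>v. \<delta> v = 1 \<longrightarrow> \<delta> (v+1) = -1"
    and D8: "\<exists>v. \<delta> v = 1" and D9: "\<exists>v. \<delta> v = -1"
    by blast+
  have x1: "x 1 = \<delta> (int m)" using b0 by simp
  have x2: "x 2 = \<delta> 0" using dA[of 0] nm by (simp add: numeral_2_eq_2)
  have x3: "x 3 = \<delta> (int m + 1)" using dB[of 1] nm by (simp add: numeral_3_eq_3)
  have xn: "x n = \<delta> (int m - 1)"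
  proof -
    have "\<delta> (int (m-1)) = x (2*(m-1)+2)" by (rule dA) (use nm in simp)
    moreover have "int (m-1) = int m - 1" using nm by simp
    moreover have "2*(m-1)+2 = n" using nm by simp
    ultimately show ?thesis by metis
  qed
  have xn2: "x (n-2) = \<delta> (int m - 2)"
  proof -
    have "\<delta> (int (m-2)) = x (2*(m-2)+2)" by (rule dA) (use nm in simp)
    moreover have "int (m-2) = int m - 2" using nm by simp
    moreover have "2*(m-2)+2 = n-2" using nm by simp
    ultimately show ?thesis by metis
  qed
  have c2: "\<exists>j\<in>{1..n}. x j = 1" using D8 dcol by metis
  have c3: "\<exists>j\<in>{1..n}. x j = -1" using D9 dcol by metis
  have c4: "\<forall>j\<in>{1..n}. x j = 1 \<longrightarrow> j = 1 \<or> j = n-2 \<or> j = n"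
  proof (intro ballI impI)
    fix j assume j: "j \<in> {1..n}" "x j = 1"
    consider (o) k where "k < m" "j = 2*k+1" | (e) k where "k < m" "j = 2*k+2"
      using jsplit[OF j(1) nm(1)] by blast
    then show "j = 1 \<or> j = n-2 \<or> j = n"
    proof cases
      case o
      then have "\<delta> (int m + int k) = 1" using dB j by simp
      then have "\<not> (1 \<le> int k)" using D2 o by auto
      then show ?thesis using o by simp
    next
      case e
      then have "\<delta> (int k) = 1" using dA j by simp
      then have "\<not> (int k \<le> int m - 3)" using D3 by auto
      then have "k = m-2 \<or> k = m-1" using e(1) by linarith
      then show ?thesis using e nm by auto
    qed
  qed
  have c5: "\<forall>j\<in>{1..n}. x j = -1 \<longrightarrow> j = 1 \<or> j = 3 \<or> j = n"
  proof (intro ballI impI)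
    fix j assume j: "j \<in> {1..n}" "x j = -1"
    consider (o) k where "k < m" "j = 2*k+1" | (e) k where "k < m" "j = 2*k+2"
      using jsplit[OF j(1) nm(1)] by blast
    then show "j = 1 \<or> j = 3 \<or> j = n"
    proof cases
      case o
      then have "\<delta> (int m + int k) = -1" using dB j by simp
      then have "\<not> (2 \<le> int k)" using D4 o by auto
      then show ?thesis using o by auto
    next
      case e
      then have "\<delta> (int k) = -1" using dA j by simp
      then have "\<not> (int k \<le> int m - 2)" using D5 by auto
      then have "k = m-1" using e(1) by linarith
      then show ?thesis using e nm by auto
    qed
  qed
  have c6: "x 1 = 1 \<longrightarrow> x 3 = -1" using D7[rule_format, of "int m"] x1 x3 by simp
  have c7: "x 3 = -1 \<longrightarrow> x 1 = 1" using D6[rule_format, of "int m + 1"] x1 x3 by simp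
  have c8: "x 1 = -1 \<longrightarrow> x n = 1" using D6[rule_format, of "int m"] x1 xn by simp
  have c9: "x n = 1 \<longrightarrow> x 1 = -1" using D7[rule_format, of "int m - 1"] x1 xn by simp
  have e1: "int m - 2 + 1 = int m - 1" "int m - 1 - 1 = int m - 2" by simp_all
  have c10: "x (n-2) = 1 \<longrightarrow> x n = -1" using D7[rule_format, of "int m - 2"] xn2 xn e1 by simp
  have c11: "x n = -1 \<longrightarrow> x (n-2) = 1" using D6[rule_format, of "int m - 1"] xn2 xn e1 by simp
  have x20: "x 2 = 0" using D0 x2 by simp
  show ?thesis by (intro conjI x20 c2 c3 c4 c5 c6 c7 c8 c9 c10 c11 conjunct1[OF ord])
qed

lemma rho_step: "j \<ge> 1 \<Longrightarrow> rho m (j+1) - rho m j = (if odd j then int m else 1 - int m)"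
  unfolding rho_def by (auto elim!: oddE evenE)

lemma dvd_small2:
  fixes N k :: int
  assumes "N dvd k" "\<bar>k\<bar> \<le> N" "N > 0"
  shows "k = 0 \<or> k = N \<or> k = -N"
  by (metis assms(1,2) dual_order.strict_iff_order dvd_small eq_abs_iff')

lemma coll:
  fixes N :: int
  assumes "N dvd (A - s - r1 - w1)" "N dvd (B - s - r2 - w2)" "r1 + w1 = r2 + w2"
  shows "N dvd (A - B)"
proof -
  have eq: "A - B = (A - s - r1 - w1) - (B - s - r2 - w2)" using assms(3) by simp
  show ?thesis unfolding eq using assms(1,2) by (rule dvd_diff)
qed

lemma border:
  fixes n m :: nat and T U x :: "nat \<Rightarrow> int" and s :: int
  assumes nm: "n = 2*m" "m \<ge> 3"
    and Tf: "\<forall>j\<in>{1..n}. int n dvd (T j - s - rho m j - int m - x j)"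
    and xr: "\<forall>j\<in>{1..n}. x j = -1 \<or> x j = 0 \<or> x j = 1"
    and cls: "x 2 = 0 \<and> (\<exists>j\<in>{1..n}. x j = 1) \<and> (\<exists>j\<in>{1..n}. x j = -1)
    \<and> (\<forall>j\<in>{1..n}. x j = 1 \<longrightarrow> j = 1 \<or> j = n-2 \<or> j = n)
    \<and> (\<forall>j\<in>{1..n}. x j = -1 \<longrightarrow> j = 1 \<or> j = 3 \<or> j = n)
    \<and> (x 1 = 1 \<longrightarrow> x 3 = -1) \<and> (x 3 = -1 \<longrightarrow> x 1 = 1)
    \<and> (x 1 = -1 \<longrightarrow> x n = 1) \<and> (x n = 1 \<longrightarrow> x 1 = -1)
    \<and> (x (n-2) = 1 \<longrightarrow> x n = -1) \<and> (x n = -1 \<longrightarrow> x (n-2) = 1)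
    \<and> (\<forall>k<m. \<bar>x (2*k+2) - x (2*k+1)\<bar> \<le> 1)"
    and Uz: "\<forall>j\<in>{1..n}. \<exists>e. (e = -1 \<or> e = 0 \<or> e = 1) \<and> int n dvd (U j - T j - int m - e)"
    and Uh: "\<forall>j\<in>{1..n-1}. \<exists>e. (e = -1 \<or> e = 0 \<or> e = 1) \<and> int n dvd (U (j+1) - U j - int m - e)"
    and Une: "\<forall>j\<in>{1..n}. \<not> int n dvd (U j - s - rho m j)"
    and Uinj: "\<forall>j\<in>{1..n}. \<forall>j'\<in>{1..n}. int n dvd (U j - U j') \<longrightarrow> j = j'"
  shows False
proof -
  from cls have x2: "x 2 = 0" and c2: "\<exists>j\<in>{1..n}. x j = 1"
    and c4: "\<forall>j\<in>{1..n}. x j = 1 \<longrightarrow> j = 1 \<or> j = n-2 \<or> j = n"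
    and c5: "\<forall>j\<in>{1..n}. x j = -1 \<longrightarrow> j = 1 \<or> j = 3 \<or> j = n"
    and c6: "x 1 = 1 \<longrightarrow> x 3 = -1" and c7: "x 3 = -1 \<longrightarrow> x 1 = 1"
    and c8: "x 1 = -1 \<longrightarrow> x n = 1" and c9: "x n = 1 \<longrightarrow> x 1 = -1"
    and c10: "x (n-2) = 1 \<longrightarrow> x n = -1" and c11: "x n = -1 \<longrightarrow> x (n-2) = 1"
    and ord: "\<forall>k<m. \<bar>x (2*k+2) - x (2*k+1)\<bar> \<le> 1"
    by blast+
  obtain z where z: "\<forall>j\<in>{1..n}. (z j = -1 \<or> z j = 0 \<or> z j = 1) \<and> int n dvd (U j - T j - int m - z j)"
    using bchoice[OF Uz] by blast
  define w where "w j = x j + z j" for j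
  have Uw: "int n dvd (U j - s - rho m j - w j)" if j: "j \<in> {1..n}" for j
  proof -
    have z1: "int n dvd (U j - T j - int m - z j)" using z j by blast
    have t1: "int n dvd (T j - s - rho m j - int m - x j)" using Tf j by blast
    have eq: "U j - s - rho m j - w j = (U j - T j - int m - z j) + (T j - s - rho m j - int m - x j) + int n"
      using nm unfolding w_def by simp
    show ?thesis unfolding eq by (rule dvd_add[OF dvd_add[OF z1 t1] dvd_refl])
  qed
  have wr: "-2 \<le> w j \<and> w j \<le> 2 \<and> w j \<noteq> 0 \<and> x j - 1 \<le> w j \<and> w j \<le> x j + 1" if j: "j \<in> {1..n}" for j
  proof -
    have "w j \<noteq> 0"
    proof
      assume "w j = 0"
      then show False using Uw[OF j] Une j by auto
    qed
    moreover have "z j = -1 \<or> z j = 0 \<or> z j = 1" using z j by blast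
    moreover have "x j = -1 \<or> x j = 0 \<or> x j = 1" using xr j by blast
    ultimately show ?thesis unfolding w_def by auto
  qed
  have wst: "(odd j \<longrightarrow> w (j+1) - w j \<le> 1 \<and> w j - w (j+1) \<le> 1) \<and> (even j \<longrightarrow> w (j+1) \<le> w j \<or> w j = -2)"
    if j: "j \<in> {1..n-1}" for j
  proof -
    obtain e where e: "e = -1 \<or> e = 0 \<or> e = 1" "int n dvd (U (j+1) - U j - int m - e)"
      using Uh j by blast
    have j1: "j \<in> {1..n}" "j+1 \<in> {1..n}" using j by auto
    have eq: "(rho m (j+1) - rho m j) - int m + w (j+1) - w j - e = (U (j+1) - U j - int m - e) - (U (j+1) - s - rho m (j+1) - w (j+1)) + (U j - s - rho m j - w j)"
       by simp
    have d: "int n dvd ((rho m (j+1) - rho m j) - int m + w (j+1) - w j - e)"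
      unfolding eq by (rule dvd_add[OF dvd_diff[OF e(2) Uw[OF j1(2)]] Uw[OF j1(1)]])
    have b1: "-2 \<le> w j" "w j \<le> 2" "-2 \<le> w (j+1)" "w (j+1) \<le> 2" using wr j1 by auto
    show ?thesis
    proof (cases "odd j")
      case True
      then have "int n dvd (w (j+1) - w j - e)" using d rho_step[of j m] j by simp
      moreover have "\<bar>w (j+1) - w j - e\<bar> < int n" using b1 e(1) nm by auto
      ultimately have "w (j+1) - w j - e = 0" by (rule dvd_small)
      then show ?thesis using True e(1) by auto
    next
      case False
      then have rs: "rho m (j+1) - rho m j = 1 - int m" using rho_step[of j m] j by simp
      have eq: "(w (j+1) - w j - e + 1) - int n = (rho m (j+1) - rho m j) - int m + w (j+1) - w j - e"
        using rs nm by simp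
      have "int n dvd ((w (j+1) - w j - e + 1) - int n)" unfolding eq by (rule d)
      then have "int n dvd (w (j+1) - w j - e + 1)"
        using dvd_add[OF _ dvd_refl[of "int n"]] by fastforce
      moreover have "\<bar>w (j+1) - w j - e + 1\<bar> \<le> int n" using b1 e(1) nm by auto
      ultimately have "w (j+1) - w j - e + 1 = 0 \<or> w (j+1) - w j - e + 1 = int n \<or> w (j+1) - w j - e + 1 = - int n"
        using dvd_small2 nm by simp
      then show ?thesis using False e(1) b1 nm by auto
    qed
  qed
  have wodd: "w j' - w j \<le> 1 \<and> w j - w j' \<le> 1" if "j' = j+1" "j \<in> {1..n-1}" "odd j" for j j'
    using wst[OF that(2)] that(1,3) by blast
  have weven: "w j' \<le> w j \<or> w j = -2" if "j' = j+1" "j \<in> {1..n-1}" "even j" for j j'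
    using wst[OF that(2)] that(1,3) by blast
  have n6: "n \<ge> 6" using nm by simp
  have ev: "even n" using nm by simp
  have mems: "n-1 \<in> {1..n}" "n-2 \<in> {1..n}" "n-3 \<in> {1..n}" "n-4 \<in> {1..n}" "n-5 \<in> {1..n}" "n \<in> {1..n}"
    using n6 by auto
  have m1: "\<And>j. j \<in> {1..n} \<Longrightarrow> x j = -1 \<or> x j = 0 \<or> x j = 1" using xr by blast
  have mb: "n-1 \<in> {1..n-1}" "n-3 \<in> {1..n-1}" "n-4 \<in> {1..n-1}" "n-5 \<in> {1..n-1}" using n6 by auto
  have pb: "odd (n-1)" "odd (n-3)" "even (n-4)" "odd (n-5)" using n6 ev by presburger+
  have m3: "(3::nat) \<in> {1..n}" and m4: "(4::nat) \<in> {1..n}" and m5: "(5::nat) \<in> {1..n}"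
    and m6: "(6::nat) \<in> {1..n}" using n6 by auto
  consider "x 1 = 1" | "x 1 = -1" | "x 1 = 0" using m1[of 1] n6 by auto
  then show False
  proof cases
    case 1
    have x3: "x 3 = -1" using c6 1 by simp
    have "\<bar>x 4 - x 3\<bar> \<le> 1" using ord nm by (auto dest!: spec[of _ 1])
    moreover have "x 4 \<noteq> -1"
    proof
      assume "x 4 = -1"
      then have "(4::nat) = 1 \<or> (4::nat) = 3 \<or> (4::nat) = n" using c5[rule_format, OF m4] by blast
      then show False using n6 ev by presburger
    qed
    ultimately have x4: "x 4 = 0" using m1[of 4] x3 n6 by auto
    have x5: "x 5 \<noteq> -1"
    proof
      assume "x 5 = -1"
      then have "(5::nat) = 1 \<or> (5::nat) = 3 \<or> (5::nat) = n" using c5[rule_format, OF m5] by blast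
      then show False using n6 ev by presburger
    qed
    have x6: "x 6 \<noteq> -1"
    proof
      assume a: "x 6 = -1"
      then have "(6::nat) = 1 \<or> (6::nat) = 3 \<or> (6::nat) = n" using c5[rule_format, OF m6] by blast
      then have "n = 6" by simp
      then show False using c11 a x4 by simp
    qed
    have w1: "w 1 > 0" using wr[of 1] 1 n6 by auto
    have "w 2 - w 1 \<le> 1 \<and> w 1 - w 2 \<le> 1" using wodd[of 2 1] n6 by simp
    then have w2: "w 2 = 1" using wr[of 2] x2 w1 n6 by auto
    have w3: "w 3 < 0" using wr[of 3] x3 n6 by auto
    have "w 4 - w 3 \<le> 1 \<and> w 3 - w 4 \<le> 1" using wodd[of 4 3] n6 by simp
    then have w4: "w 4 = -1" using wr[of 4] x4 w3 n6 by auto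
    have "w 5 \<le> w 4 \<or> w 4 = -2" using weven[of 5 4] n6 by simp
    then have w5: "w 5 = -1" using wr[of 5] x5 w4 n6 m1[of 5] by auto
    have "w 6 - w 5 \<le> 1 \<and> w 5 - w 6 \<le> 1" using wodd[of 6 5] n6 by simp
    then have w6: "w 6 = -1" using wr[of 6] x6 w5 n6 m1[of 6] by auto
    have dv: "int n dvd (U 2 - U 6)"
      by (rule coll[OF Uw[of 2] Uw[of 6]]) (use n6 w2 w6 in \<open>auto simp: rho_def\<close>)
    have mem: "(2::nat) \<in> {1..n}" "(6::nat) \<in> {1..n}" using n6 by auto
    have "(2::nat) = 6" using Uinj mem dv by blast
    then show False by simp
  next
    case 2
    have xn: "x n = 1" using c8 2 by simp
    have x4: "x 4 \<noteq> -1"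
    proof
      assume "x 4 = -1"
      then have "(4::nat) = 1 \<or> (4::nat) = 3 \<or> (4::nat) = n" using c5[rule_format, OF m4] by blast
      then show False using n6 ev by presburger
    qed
    have xn1: "x (n-1) \<noteq> 1"
    proof
      assume "x (n-1) = 1"
      then have "n-1 = 1 \<or> n-1 = n-2 \<or> n-1 = n" using c4[rule_format, OF mems(1)] by blast
      then show False using n6 ev by presburger
    qed
    have w1: "w 1 < 0" using wr[of 1] 2 n6 by auto
    have "w 2 - w 1 \<le> 1 \<and> w 1 - w 2 \<le> 1" using wodd[of 2 1] n6 by simp
    then have w2: "w 2 = -1" using wr[of 2] x2 w1 n6 by auto
    have "w 3 \<le> w 2 \<or> w 2 = -2" using weven[of 3 2] n6 by simp
    then have w3: "w 3 \<le> -1" using w2 by auto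
    have "w 4 - w 3 \<le> 1 \<and> w 3 - w 4 \<le> 1" using wodd[of 4 3] n6 by simp
    then have w4: "w 4 = -1" using wr[of 4] x4 w3 n6 m1[of 4] by auto
    have wn: "w n > 0" using wr[OF mems(6)] xn n6 by auto
    have "w (n-1+1) - w (n-1) \<le> 1 \<and> w (n-1) - w (n-1+1) \<le> 1" using wodd[OF refl mb(1) pb(1)] by simp
    then have "w n - w (n-1) \<le> 1 \<and> w (n-1) - w n \<le> 1" using n6 by simp
    then have wn1: "w (n-1) = 1" using wr[OF mems(1)] xn1 wn n6 m1[OF mems(1)] by auto
    have r4: "rho m 4 = 1 + int m" by (simp add: rho_def)
    have e1: "n - 1 = 2*(m-1)+1" using nm by simp
    have rn1: "rho m (n-1) = int m - 1" unfolding e1 rho_odd using nm by simp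
    have "int n dvd (U 4 - U (n-1))"
      by (rule coll[OF Uw[of 4] Uw[of "n-1"]]) (use n6 w4 wn1 r4 rn1 in auto)
    moreover have mem: "(4::nat) \<in> {1..n}" "n-1 \<in> {1..n}" using n6 by auto
    ultimately have "(4::nat) = n-1" using Uinj by blast
    then show False using ev by presburger
  next
    case 3
    have x3: "x 3 = 0"
    proof -
      have "x 3 \<noteq> -1" using c7 3 by auto
      moreover have "x 3 \<noteq> 1"
    proof
      assume "x 3 = 1"
      then have "(3::nat) = 1 \<or> (3::nat) = n-2 \<or> (3::nat) = n" using c4[rule_format, OF m3] by blast
      then show False using n6 ev by presburger
    qed
      ultimately show ?thesis using m1[of 3] n6 by auto
    qed
    obtain j where j: "j \<in> {1..n}" "x j = 1" using c2 by blast
    then have "j = n-2"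
    proof -
      have "j = 1 \<or> j = n-2 \<or> j = n" using c4 j by blast
      moreover have "x n \<noteq> 1" using c9 3 by auto
      ultimately show ?thesis using j 3 by auto
    qed
    then have xn2: "x (n-2) = 1" using j by simp
    then have xn: "x n = -1" using c10 by simp
    have xn4: "x (n-4) \<noteq> -1"
    proof
      assume "x (n-4) = -1"
      then have "n-4 = 1 \<or> n-4 = 3 \<or> n-4 = n" using c5[rule_format, OF mems(4)] by blast
      then show False using n6 ev by presburger
    qed
    have xn5: "x (n-5) \<noteq> 1"
    proof
      assume a: "x (n-5) = 1"
      then have "n-5 = 1 \<or> n-5 = n-2 \<or> n-5 = n" using c4[rule_format, OF mems(5)] by blast
      then have "n - 5 = 1" using n6 by auto
      then show False using a 3 by simp
    qed
    have xn1: "x (n-1) \<noteq> -1"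
    proof
      assume "x (n-1) = -1"
      then have "n-1 = 1 \<or> n-1 = 3 \<or> n-1 = n" using c5[rule_format, OF mems(1)] by blast
      then show False using n6 ev by presburger
    qed
    have wn2: "w (n-2) > 0" using wr[OF mems(2)] xn2 n6 by auto
    have "w (n-3+1) - w (n-3) \<le> 1 \<and> w (n-3) - w (n-3+1) \<le> 1" using wodd[OF refl mb(2) pb(2)] by simp
    moreover have "n-3+1 = n-2" using n6 by simp
    ultimately have "w (n-2) - w (n-3) \<le> 1 \<and> w (n-3) - w (n-2) \<le> 1" by simp
    then have wn3: "w (n-3) > 0" using wr[OF mems(3)] wn2 n6 by auto
    have "w (n-4+1) \<le> w (n-4) \<or> w (n-4) = -2" using weven[OF refl mb(3) pb(3)] by simp
    moreover have "n-4+1 = n-3" using n6 by simp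
    ultimately have "w (n-3) \<le> w (n-4) \<or> w (n-4) = -2" by simp
    then have wn4: "w (n-4) > 0" using wr[OF mems(4)] wn3 xn4 n6 m1[OF mems(4)] by auto
    have "w (n-5+1) - w (n-5) \<le> 1 \<and> w (n-5) - w (n-5+1) \<le> 1" using wodd[OF refl mb(4) pb(4)] by simp
    moreover have "n-5+1 = n-4" using n6 by simp
    ultimately have "w (n-4) - w (n-5) \<le> 1 \<and> w (n-5) - w (n-4) \<le> 1" by simp
    then have wn5: "w (n-5) = 1" using wr[OF mems(5)] wn4 xn5 n6 m1[OF mems(5)] by auto
    have wn: "w n < 0" using wr[OF mems(6)] xn n6 by auto
    have "w (n-1+1) - w (n-1) \<le> 1 \<and> w (n-1) - w (n-1+1) \<le> 1" using wodd[OF refl mb(1) pb(1)] by simp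
    then have "w n - w (n-1) \<le> 1 \<and> w (n-1) - w n \<le> 1" using n6 by simp
    then have wn1: "w (n-1) = -1" using wr[OF mems(1)] xn1 wn n6 m1[OF mems(1)] by auto
    have e5: "n - 5 = 2*(m-3)+1" using nm by simp
    have rn5: "rho m (n-5) = int m - 3" unfolding e5 rho_odd using nm by simp
    have e1: "n - 1 = 2*(m-1)+1" using nm by simp
    have rn1: "rho m (n-1) = int m - 1" unfolding e1 rho_odd using nm by simp
    have "int n dvd (U (n-5) - U (n-1))"
      by (rule coll[OF Uw[of "n-5"] Uw[of "n-1"]]) (use n6 wn5 wn1 rn5 rn1 in auto)
    moreover have mem: "n-5 \<in> {1..n}" "n-1 \<in> {1..n}" using n6 by auto
    ultimately have "n-5 = n-1" using Uinj by blast
    then show False using n6 by simp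
  qed
qed



lemma keynb:
  fixes n m :: nat and L :: "nat \<Rightarrow> nat \<Rightarrow> int" and s :: int
  assumes nm: "n = 2*m" "m \<ge> 3"
    and rowsurj: "\<forall>i\<in>{1..n}. \<forall>q. \<exists>j\<in>{1..n}. int n dvd (L i j - q)"
    and colinj: "\<forall>j\<in>{1..n}. \<forall>i\<in>{1..n}. \<forall>i'\<in>{1..n}. int n dvd (L i j - L i' j) \<longrightarrow> i = i'"
    and rowinj: "\<forall>i\<in>{1..n}. \<forall>j\<in>{1..n}. \<forall>j'\<in>{1..n}. int n dvd (L i j - L i j') \<longrightarrow> j = j'"
    and hor: "\<forall>i\<in>{1..n}. \<forall>j\<in>{1..n-1}. \<exists>e. (e = -1 \<or> e = 0 \<or> e = 1) \<and> int n dvd (L i (j+1) - L i j - int m - e)"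
    and ver: "\<forall>i\<in>{1..n}. \<forall>i'\<in>{1..n}. (i' = i+1 \<or> i = i'+1) \<longrightarrow>
        (\<forall>j\<in>{1..n}. \<exists>e. (e = -1 \<or> e = 0 \<or> e = 1) \<and> int n dvd (L i' j - L i j - int m - e))"
    and Ai: "\<forall>j\<in>{1..n}. int n dvd (L i j - s - rho m j)"
    and ii: "i \<in> {1..n}" "i' \<in> {1..n}" "i' = i+1 \<or> i = i'+1"
  shows "\<forall>j\<in>{1..n}. int n dvd (L i' j - L i j - (L i' 1 - L i 1))"
proof -
  have nbr: "\<exists>x. \<forall>j\<in>{1..n}. (x j = -1 \<or> x j = 0 \<or> x j = 1) \<and> int n dvd (L b j - L i j - int m - x j)
     \<and> int n dvd (L b j - s - rho m j - int m - x j)"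
    if b: "b \<in> {1..n}" "b = i+1 \<or> i = b+1" for b
  proof -
    have "\<forall>j\<in>{1..n}. \<exists>e. (e = -1 \<or> e = 0 \<or> e = 1) \<and> int n dvd (L b j - L i j - int m - e)"
      using ver[rule_format, OF ii(1) b(1) b(2)] by blast
    from bchoice[OF this] obtain x where x: "\<forall>j\<in>{1..n}. (x j = -1 \<or> x j = 0 \<or> x j = 1) \<and> int n dvd (L b j - L i j - int m - x j)"
      by blast
    have "int n dvd (L b j - s - rho m j - int m - x j)" if j: "j \<in> {1..n}" for j
    proof -
      have eq: "L b j - s - rho m j - int m - x j = (L b j - L i j - int m - x j) + (L i j - s - rho m j)" by simp
      have f1: "int n dvd (L b j - L i j - int m - x j)" using x j by blast
      have f2: "int n dvd (L i j - s - rho m j)" using Ai j by blast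
      show ?thesis unfolding eq by (rule dvd_add[OF f1 f2])
    qed
    then show ?thesis using x by blast
  qed
  obtain x where x: "\<forall>j\<in>{1..n}. (x j = -1 \<or> x j = 0 \<or> x j = 1) \<and> int n dvd (L i' j - L i j - int m - x j)
     \<and> int n dvd (L i' j - s - rho m j - int m - x j)" using nbr[OF ii(2,3)] by blast
  have m1: "1 \<in> {1..n}" using nm by simp
  show ?thesis
  proof (cases "\<forall>j\<in>{1..n}. x j = x 1")
    case True
    show ?thesis
    proof
      fix j assume j: "j \<in> {1..n}"
      have xj: "x j = x 1" using True j by blast
      have eq: "L i' j - L i j - (L i' 1 - L i 1) = (L i' j - L i j - int m - x j) - (L i' 1 - L i 1 - int m - x 1)"
        using xj by linarith
      have f1: "int n dvd (L i' j - L i j - int m - x j)" using x j by blast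
      have f2: "int n dvd (L i' 1 - L i 1 - int m - x 1)" using x m1 by blast
      show "int n dvd (L i' j - L i j - (L i' 1 - L i 1))" unfolding eq by (rule dvd_diff[OF f1 f2])
    qed
  next
    case False
    then obtain j0 where j0: "j0 \<in> {1..n}" "x j0 \<noteq> x 1" by blast
    have clsgen: "y 2 = 0 \<and> (\<exists>j\<in>{1..n}. y j = 1) \<and> (\<exists>j\<in>{1..n}. y j = -1)
    \<and> (\<forall>j\<in>{1..n}. y j = 1 \<longrightarrow> j = 1 \<or> j = n-2 \<or> j = n)
    \<and> (\<forall>j\<in>{1..n}. y j = -1 \<longrightarrow> j = 1 \<or> j = 3 \<or> j = n)
    \<and> (y 1 = 1 \<longrightarrow> y 3 = -1) \<and> (y 3 = -1 \<longrightarrow> y 1 = 1)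
    \<and> (y 1 = -1 \<longrightarrow> y n = 1) \<and> (y n = 1 \<longrightarrow> y 1 = -1)
    \<and> (y (n-2) = 1 \<longrightarrow> y n = -1) \<and> (y n = -1 \<longrightarrow> y (n-2) = 1)
    \<and> (\<forall>k<m. \<bar>y (2*k+2) - y (2*k+1)\<bar> \<le> 1)"
      if yb: "b \<in> {1..n}" and yx: "\<forall>j\<in>{1..n}. (y j = -1 \<or> y j = 0 \<or> y j = 1) \<and> int n dvd (L b j - s - rho m j - int m - y j)"
        and yj: "k0 \<in> {1..n}" "y k0 \<noteq> y 1" for b y k0
    proof (rule classify[OF nm])
      show "\<forall>j\<in>{1..n}. int n dvd (L b j - s - rho m j - int m - y j)" using yx by blast
      show "\<forall>j\<in>{1..n}. y j = -1 \<or> y j = 0 \<or> y j = 1" using yx by blast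
      show "\<forall>j\<in>{1..n-1}. \<exists>e. (e = -1 \<or> e = 0 \<or> e = 1) \<and> int n dvd (L b (j+1) - L b j - int m - e)"
        using hor yb by blast
      show "\<forall>q. \<exists>j\<in>{1..n}. int n dvd (L b j - q)" using rowsurj yb by blast
      show "k0 \<in> {1..n}" "y k0 \<noteq> y 1" using yj by auto
    qed
    have cls: "x 2 = 0 \<and> (\<exists>j\<in>{1..n}. x j = 1) \<and> (\<exists>j\<in>{1..n}. x j = -1)
    \<and> (\<forall>j\<in>{1..n}. x j = 1 \<longrightarrow> j = 1 \<or> j = n-2 \<or> j = n)
    \<and> (\<forall>j\<in>{1..n}. x j = -1 \<longrightarrow> j = 1 \<or> j = 3 \<or> j = n)
    \<and> (x 1 = 1 \<longrightarrow> x 3 = -1) \<and> (x 3 = -1 \<longrightarrow> x 1 = 1)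
    \<and> (x 1 = -1 \<longrightarrow> x n = 1) \<and> (x n = 1 \<longrightarrow> x 1 = -1)
    \<and> (x (n-2) = 1 \<longrightarrow> x n = -1) \<and> (x n = -1 \<longrightarrow> x (n-2) = 1)
    \<and> (\<forall>k<m. \<bar>x (2*k+2) - x (2*k+1)\<bar> \<le> 1)"
      by (rule clsgen[OF ii(2) _ j0]) (use x in blast)
    have m2: "2 \<in> {1..n}" using nm by simp
    have "(\<exists>b\<in>{1..n}. b \<noteq> i' \<and> (b = i+1 \<or> i = b+1)) \<or> (\<exists>b\<in>{1..n}. b \<noteq> i \<and> (b = i'+1 \<or> i' = b+1))"
    proof (cases "i' = i+1")
      case True
      show ?thesis
      proof (cases "i \<ge> 2")
        case True
        then have "i-1 \<in> {1..n} \<and> i-1 \<noteq> i' \<and> (i-1 = i+1 \<or> i = (i-1)+1)" using ii \<open>i' = i+1\<close> by auto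
        then show ?thesis by blast
      next
        case False
        then have "i'+1 \<in> {1..n} \<and> i'+1 \<noteq> i \<and> (i'+1 = i'+1 \<or> i' = (i'+1)+1)" using ii \<open>i' = i+1\<close> nm by auto
        then show ?thesis by blast
      qed
    next
      case False
      then have ii': "i = i'+1" using ii by simp
      show ?thesis
      proof (cases "i+1 \<le> n")
        case True
        then have "i+1 \<in> {1..n} \<and> i+1 \<noteq> i' \<and> (i+1 = i+1 \<or> i = (i+1)+1)" using ii ii' by auto
        then show ?thesis by blast
      next
        case False
        then have "i'-1 \<in> {1..n} \<and> i'-1 \<noteq> i \<and> (i'-1 = i'+1 \<or> i' = (i'-1)+1)" using ii ii' nm by auto
        then show ?thesis by blast
      qed
    qed
    then show ?thesis
    proof
      assume "\<exists>b\<in>{1..n}. b \<noteq> i' \<and> (b = i+1 \<or> i = b+1)"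
      then obtain b where b: "b \<in> {1..n}" "b \<noteq> i'" "b = i+1 \<or> i = b+1" by blast
      obtain y where y: "\<forall>j\<in>{1..n}. (y j = -1 \<or> y j = 0 \<or> y j = 1) \<and> int n dvd (L b j - L i j - int m - y j)
         \<and> int n dvd (L b j - s - rho m j - int m - y j)" using nbr[OF b(1,3)] by blast
      have yx: "y j \<noteq> x j" if j: "j \<in> {1..n}" for j
      proof
        assume e: "y j = x j"
        have eq: "L b j - L i' j = (L b j - L i j - int m - y j) - (L i' j - L i j - int m - x j)" using e by simp
        have f1: "int n dvd (L b j - L i j - int m - y j)" using y j by blast
        have f2: "int n dvd (L i' j - L i j - int m - x j)" using x j by blast
        have "int n dvd (L b j - L i' j)" unfolding eq by (rule dvd_diff[OF f1 f2])
        then have "b = i'" using colinj j b(1) ii(2) by blast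
        then show False using b(2) by simp
      qed
      show ?thesis
      proof (cases "\<forall>j\<in>{1..n}. y j = y 1")
        case True
        have "y 2 \<noteq> 0" using yx[OF m2] cls by simp
        then have "y 2 = 1 \<or> y 2 = -1" using y m2 by blast
        moreover have "y 2 = y j" if "j \<in> {1..n}" for j using True that m2 by metis
        ultimately show ?thesis using cls yx by metis
      next
        case False
        then obtain k0 where k0: "k0 \<in> {1..n}" "y k0 \<noteq> y 1" by blast
        have "y 2 = 0" using clsgen[OF b(1) _ k0] y by blast
        then show ?thesis using yx[OF m2] cls by simp
      qed
    next
      assume "\<exists>b\<in>{1..n}. b \<noteq> i \<and> (b = i'+1 \<or> i' = b+1)"
      then obtain b where b: "b \<in> {1..n}" "b \<noteq> i" "b = i'+1 \<or> i' = b+1" by blast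
      have "False"
      proof (rule border[OF nm _ _ cls])
        show "\<forall>j\<in>{1..n}. int n dvd (L i' j - s - rho m j - int m - x j)" using x by blast
        show "\<forall>j\<in>{1..n}. x j = -1 \<or> x j = 0 \<or> x j = 1" using x by blast
        show "\<forall>j\<in>{1..n}. \<exists>e. (e = -1 \<or> e = 0 \<or> e = 1) \<and> int n dvd (L b j - L i' j - int m - e)"
          using ver[rule_format, OF ii(2) b(1) b(3)] by blast
        show "\<forall>j\<in>{1..n-1}. \<exists>e. (e = -1 \<or> e = 0 \<or> e = 1) \<and> int n dvd (L b (j+1) - L b j - int m - e)"
          using hor b by blast
        show "\<forall>j\<in>{1..n}. \<not> int n dvd (L b j - s - rho m j)"
        proof (intro ballI notI)
          fix j assume j: "j \<in> {1..n}" and d: "int n dvd (L b j - s - rho m j)"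
          have eq: "L b j - L i j = (L b j - s - rho m j) - (L i j - s - rho m j)" by simp
          have f2: "int n dvd (L i j - s - rho m j)" using Ai j by blast
          have "int n dvd (L b j - L i j)" unfolding eq by (rule dvd_diff[OF d f2])
          then have "b = i" using colinj j b(1) ii(1) by blast
          then show False using b(2) by simp
        qed
        show "\<forall>j\<in>{1..n}. \<forall>j'\<in>{1..n}. int n dvd (L b j - L b j') \<longrightarrow> j = j'"
          using rowinj b(1) by blast
      qed
      then show ?thesis by simp
    qed
  qed
qed



lemma adj_of_cdist:
  fixes n m :: nat and a b :: int
  assumes nm: "n = 2*m" "m \<ge> 3" and c: "cdist n a b \<ge> int m - 1"
  shows "\<exists>e. (e = -1 \<or> e = 0 \<or> e = 1) \<and> int n dvd (b - a - int m - e)"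
proof -
  define d where "d = (b - a) mod int n"
  have d: "0 \<le> d" "d < int n" using nm unfolding d_def by auto
  have "a - b = - (b - a)" by simp
  then have ab: "(a - b) mod int n = (if d = 0 then 0 else int n - d)"
    unfolding d_def using zmod_zminus1_eq_if[of "b - a" "int n"] by simp
  have cd: "cdist n a b = min ((a - b) mod int n) d" unfolding cdist_def d_def by simp
  have "d \<noteq> 0"
  proof
    assume "d = 0"
    then have "cdist n a b = 0" using cd ab by simp
    then show False using c nm by simp
  qed
  then have "min (int n - d) d \<ge> int m - 1" using cd ab c by simp
  then have dr: "int m - 1 \<le> d" "d \<le> int m + 1" using nm by auto
  define e where "e = d - int m"
  have "e = -1 \<or> e = 0 \<or> e = 1" using dr unfolding e_def by auto
  moreover have "int n dvd (b - a - int m - e)"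
  proof -
    have "b - a - int m - e = - (d - (b - a))" unfolding e_def by simp
    moreover have "int n dvd (d - (b - a))" unfolding d_def by (rule dvd_mod_diff)
    ultimately show ?thesis by (metis dvd_minus_iff)
  qed
  ultimately show ?thesis by blast
qed

lemma eqmod:
  fixes N a b :: int
  assumes "a \<in> {1..N}" "b \<in> {1..N}" "N dvd (a - b)"
  shows "a = b"
proof -
  have "\<bar>a - b\<bar> < N" using assms(1,2) by auto
  then have "a - b = 0" using dvd_small[OF assms(3)] by simp
  then show ?thesis by simp
qed

lemma Aform_of_diff:
  fixes n m :: nat and R :: "nat \<Rightarrow> int"
  assumes nm: "n = 2*m"
    and D: "\<forall>j\<in>{1..n-1}. (R (j+1) - R j) mod int n = int m + (if even j then 1 else 0)"
  shows "\<forall>j\<in>{1..n}. int n dvd (R j - R 1 - rho m j)"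
proof -
  have "1 \<le> j \<longrightarrow> j \<le> n \<longrightarrow> int n dvd (R j - R 1 - rho m j)" for j
  proof (induction j)
    case 0 then show ?case by simp
  next
    case (Suc j)
    show ?case
    proof (cases "j = 0")
      case True then show ?thesis by (simp add: rho_def)
    next
      case False
      show ?thesis
      proof (intro impI)
        assume "Suc j \<le> n"
        then have j: "j \<in> {1..n-1}" using False by auto
        have ih: "int n dvd (R j - R 1 - rho m j)" using Suc.IH j by auto
        have dj: "(R (j+1) - R j) mod int n = int m + (if even j then 1 else 0)" using D j by blast
        have rs: "rho m (j+1) - rho m j = (if odd j then int m else 1 - int m)" using rho_step[of j m] j by auto
        have k: "int n dvd ((R (j+1) - R j) mod int n - (R (j+1) - R j))" by (rule dvd_mod_diff)
        have eq: "R (Suc j) - R 1 - rho m (Suc j) = (R j - R 1 - rho m j)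
           - ((R (j+1) - R j) mod int n - (R (j+1) - R j)) + ((R (j+1) - R j) mod int n - (rho m (j+1) - rho m j))"
          by simp
        have last: "int n dvd ((R (j+1) - R j) mod int n - (rho m (j+1) - rho m j))"
        proof (cases "even j")
          case True
          then have "(R (j+1) - R j) mod int n - (rho m (j+1) - rho m j) = int n" using dj rs nm by simp
          then show ?thesis by simp
        next
          case False
          then have "(R (j+1) - R j) mod int n - (rho m (j+1) - rho m j) = 0" using dj rs by simp
          then show ?thesis by simp
        qed
        show "int n dvd (R (Suc j) - R 1 - rho m (Suc j))" unfolding eq
          by (rule dvd_add[OF dvd_diff[OF ih k] last])
      qed
    qed
  qed
  then show ?thesis by auto
qed

theorem mainTheorem18:
  fixes n :: nat and L :: "nat \<Rightarrow> nat \<Rightarrow> int"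
  assumes "n \<ge> 6" and "even n"
    and "latin_square n L"
    and "inner_distance n L = int (n div 2) - 1"
    and "\<exists>i\<in>{1..n}. \<forall>j\<in>{1..n}. ext_diff_row n (L i) j = rowA n j"
  shows "row_product n L"
proof -
  define m where "m = n div 2"
  have nm: "n = 2*m" "m \<ge> 3" using assms(1,2) unfolding m_def by auto
  have rows: "\<forall>i\<in>{1..n}. bij_betw (\<lambda>j. L i j) {1..n} {1..int n}"
    and cols: "\<forall>j\<in>{1..n}. bij_betw (\<lambda>i. L i j) {1..n} {1..int n}"
    using assms(3) unfolding latin_square_def by auto
  have rng: "L i j \<in> {1..int n}" if "i \<in> {1..n}" "j \<in> {1..n}" for i j
    using bij_betw_apply[OF bspec[OF rows that(1)] that(2)] by simp
  have rowinj: "\<forall>i\<in>{1..n}. \<forall>j\<in>{1..n}. \<forall>j'\<in>{1..n}. int n dvd (L i j - L i j') \<longrightarrow> j = j'"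
  proof (intro ballI impI)
    fix i j j' assume h: "i \<in> {1..n}" "j \<in> {1..n}" "j' \<in> {1..n}" "int n dvd (L i j - L i j')"
    have "L i j = L i j'" using eqmod[OF rng[OF h(1,2)] rng[OF h(1,3)] h(4)] .
    then show "j = j'" using bij_betw_imp_inj_on[OF bspec[OF rows h(1)]] h(2,3) by (auto dest: inj_onD)
  qed
  have colinj: "\<forall>j\<in>{1..n}. \<forall>i\<in>{1..n}. \<forall>i'\<in>{1..n}. int n dvd (L i j - L i' j) \<longrightarrow> i = i'"
  proof (intro ballI impI)
    fix i j i' assume h: "j \<in> {1..n}" "i \<in> {1..n}" "i' \<in> {1..n}" "int n dvd (L i j - L i' j)"
    have "L i j = L i' j" using eqmod[OF rng[OF h(2,1)] rng[OF h(3,1)] h(4)] .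
    then show "i = i'" using bij_betw_imp_inj_on[OF bspec[OF cols h(1)]] h(2,3) by (auto dest: inj_onD)
  qed
  have rowsurj: "\<forall>i\<in>{1..n}. \<forall>q. \<exists>j\<in>{1..n}. int n dvd (L i j - q)"
  proof (intro ballI allI)
    fix i q assume i: "i \<in> {1..n}"
    define q' where "q' = (q - 1) mod int n + 1"
    have "0 \<le> (q - 1) mod int n" "(q - 1) mod int n < int n" using nm by simp_all
    then have "q' \<in> {1..int n}" unfolding q'_def by auto
    then obtain j where j: "j \<in> {1..n}" "L i j = q'"
      using bij_betw_imp_surj_on[OF bspec[OF rows i]] by (metis imageE)
    have eq: "L i j - q = (q - 1) mod int n - (q - 1)" using j(2) unfolding q'_def by simp
    have "int n dvd (L i j - q)" unfolding eq by (rule dvd_mod_diff)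
    then show "\<exists>j\<in>{1..n}. int n dvd (L i j - q)" using j(1) by blast
  qed
  define S1 where "S1 = {cdist n (L i j) (L i (j+1)) | i j. i \<in> {1..n} \<and> j \<in> {1..n-1}}"
  define S2 where "S2 = {cdist n (L i j) (L (i+1) j) | i j. i \<in> {1..n-1} \<and> j \<in> {1..n}}"
  have fin: "finite (S1 \<union> S2)" unfolding S1_def S2_def
    by (intro finite_UnI finite_image_set2) auto
  have idm: "Min (S1 \<union> S2) = int m - 1" using assms(4) unfolding inner_distance_def S1_def S2_def m_def by simp
  have hor: "\<forall>i\<in>{1..n}. \<forall>j\<in>{1..n-1}. \<exists>e. (e = -1 \<or> e = 0 \<or> e = 1) \<and> int n dvd (L i (j+1) - L i j - int m - e)"
  proof (intro ballI)
    fix i j assume "i \<in> {1..n}" "j \<in> {1..n-1}"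
    then have "cdist n (L i j) (L i (j+1)) \<in> S1 \<union> S2" unfolding S1_def by blast
    then have "cdist n (L i j) (L i (j+1)) \<ge> int m - 1" using Min_le[OF fin] idm by metis
    then show "\<exists>e. (e = -1 \<or> e = 0 \<or> e = 1) \<and> int n dvd (L i (j+1) - L i j - int m - e)"
      by (rule adj_of_cdist[OF nm])
  qed
  have ver0: "\<exists>e. (e = -1 \<or> e = 0 \<or> e = 1) \<and> int n dvd (L (i+1) j - L i j - int m - e)"
    if "i \<in> {1..n-1}" "j \<in> {1..n}" for i j
  proof -
    have "cdist n (L i j) (L (i+1) j) \<in> S1 \<union> S2" unfolding S2_def using that by blast
    then have "cdist n (L i j) (L (i+1) j) \<ge> int m - 1" using Min_le[OF fin] idm by metis
    then show ?thesis by (rule adj_of_cdist[OF nm])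
  qed
  have ver: "\<forall>i\<in>{1..n}. \<forall>i'\<in>{1..n}. (i' = i+1 \<or> i = i'+1) \<longrightarrow>
        (\<forall>j\<in>{1..n}. \<exists>e. (e = -1 \<or> e = 0 \<or> e = 1) \<and> int n dvd (L i' j - L i j - int m - e))"
  proof (intro ballI impI)
    fix i i' j assume h: "i \<in> {1..n}" "i' \<in> {1..n}" "i' = i+1 \<or> i = i'+1" "j \<in> {1..n}"
    show "\<exists>e. (e = -1 \<or> e = 0 \<or> e = 1) \<and> int n dvd (L i' j - L i j - int m - e)"
    proof (cases "i' = i+1")
      case True
      then have "i \<in> {1..n-1}" using h by auto
      then show ?thesis using ver0[of i j] h(4) True by simp
    next
      case False
      then have ii: "i = i'+1" using h by simp
      have "i' \<in> {1..n-1}" using h ii by auto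
      then obtain e where e: "e = -1 \<or> e = 0 \<or> e = 1" "int n dvd (L i j - L i' j - int m - e)"
        using ver0[of i' j] h(4) ii by auto
      have eq: "L i' j - L i j - int m - (-e) = - (L i j - L i' j - int m - e) - int n" using nm by simp
      have "int n dvd (L i' j - L i j - int m - (-e))" unfolding eq
        by (rule dvd_diff[OF iffD2[OF dvd_minus_iff e(2)] dvd_refl])
      moreover have "-e = -1 \<or> -e = 0 \<or> -e = 1" using e(1) by auto
      ultimately show ?thesis by blast
    qed
  qed
  obtain i0 where i0: "i0 \<in> {1..n}" "\<forall>j\<in>{1..n}. ext_diff_row n (L i0) j = rowA n j" using assms(5) by blast
  have D0: "\<forall>j\<in>{1..n-1}. (L i0 (j+1) - L i0 j) mod int n = int m + (if even j then 1 else 0)"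
  proof
    fix j assume j: "j \<in> {1..n-1}"
    then have "ext_diff_row n (L i0) j = rowA n j" using i0 by auto
    moreover have "j < n" "j \<noteq> n" using j by auto
    ultimately show "(L i0 (j+1) - L i0 j) mod int n = int m + (if even j then 1 else 0)"
      unfolding ext_diff_row_def rowA_def diff_row_def m_def by (auto split: if_splits)
  qed
  define P where "P i = (\<exists>s. \<forall>j\<in>{1..n}. int n dvd (L i j - s - rho m j))" for i
  have P0: "P i0" unfolding P_def using Aform_of_diff[OF nm(1) D0] by blast
  have step: "P i'" if Pi: "P i" and ii: "i \<in> {1..n}" "i' \<in> {1..n}" "i' = i+1 \<or> i = i'+1" for i i'
  proof -
    obtain s where s: "\<forall>j\<in>{1..n}. int n dvd (L i j - s - rho m j)" using Pi unfolding P_def by blast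
    have K: "\<forall>j\<in>{1..n}. int n dvd (L i' j - L i j - (L i' 1 - L i 1))"
      by (rule keynb[OF nm rowsurj colinj rowinj hor ver s ii])
    have "int n dvd (L i' j - (s + (L i' 1 - L i 1)) - rho m j)" if j: "j \<in> {1..n}" for j
    proof -
      have eq: "L i' j - (s + (L i' 1 - L i 1)) - rho m j = (L i' j - L i j - (L i' 1 - L i 1)) + (L i j - s - rho m j)" by simp
      have f1: "int n dvd (L i' j - L i j - (L i' 1 - L i 1))" using K j by blast
      have f2: "int n dvd (L i j - s - rho m j)" using s j by blast
      show ?thesis unfolding eq by (rule dvd_add[OF f1 f2])
    qed
    then show ?thesis unfolding P_def by blast
  qed
  have Pup: "i0 + k \<le> n \<longrightarrow> P (i0 + k)" for k
  proof (induction k)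
    case 0 then show ?case using P0 by simp
  next
    case (Suc k)
    show ?case
    proof
      assume "i0 + Suc k \<le> n"
      then show "P (i0 + Suc k)" using step[of "i0 + k" "i0 + Suc k"] Suc i0(1) by auto
    qed
  qed
  have Pdown: "k < i0 \<longrightarrow> P (i0 - k)" for k
  proof (induction k)
    case 0 then show ?case using P0 by simp
  next
    case (Suc k)
    show ?case
    proof
      assume k: "Suc k < i0"
      have "i0 - k = (i0 - Suc k) + 1" using k by simp
      then show "P (i0 - Suc k)" using step[of "i0 - k" "i0 - Suc k"] Suc k i0(1) by auto
    qed
  qed
  have Pall: "P i" if "i \<in> {1..n}" for i
  proof (cases "i \<ge> i0")
    case True
    then show ?thesis using Pup[of "i - i0"] that by auto
  next
    case False
    then show ?thesis using Pdown[of "i0 - i"] that by auto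
  qed
  have vconst: "int n dvd (L (i+1) j - L i j - (L (i+1) 1 - L i 1))" if "i \<in> {1..n-1}" "j \<in> {1..n}" for i j
  proof -
    have ii: "i \<in> {1..n}" "i+1 \<in> {1..n}" using that by auto
    obtain s where s: "\<forall>j\<in>{1..n}. int n dvd (L i j - s - rho m j)" using Pall[OF ii(1)] unfolding P_def by blast
    have "\<forall>j\<in>{1..n}. int n dvd (L (i+1) j - L i j - (L (i+1) 1 - L i 1))"
      by (rule keynb[OF nm rowsurj colinj rowinj hor ver s ii]) simp
    then show ?thesis using that(2) by blast
  qed
  define d where "d j = diff_row n (L 1) j" for j
  define d' where "d' i = diff_row n (\<lambda>i. L i 1) i" for i
  have m1: "1 \<in> {1..n}" using nm by simp
  have dr: "is_difference_row n d"
    unfolding is_difference_row_def latin_row_def d_def using bspec[OF rows m1] by (intro exI[of _ "L 1"]) auto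
  have dr': "is_difference_row n d'"
    unfolding is_difference_row_def latin_row_def d'_def using bspec[OF cols m1]
    by (intro exI[of _ "\<lambda>i. L i 1"]) auto
  have SA: "1 \<le> j \<longrightarrow> j \<le> n \<longrightarrow> int n dvd (L 1 j - L 1 1 - (\<Sum>k\<in>{1..<j}. d k))" for j
  proof (induction j)
    case 0 then show ?case by simp
  next
    case (Suc j)
    show ?case
    proof (cases "j = 0")
      case True then show ?thesis by simp
    next
      case False
      show ?thesis
      proof (intro impI)
        assume "Suc j \<le> n"
        then have ih: "int n dvd (L 1 j - L 1 1 - (\<Sum>k\<in>{1..<j}. d k))" using Suc.IH False by auto
        have sm: "(\<Sum>k\<in>{1..<Suc j}. d k) = (\<Sum>k\<in>{1..<j}. d k) + d j" using False by simp
        have k: "int n dvd (d j - (L 1 (j+1) - L 1 j))" unfolding d_def diff_row_def by (rule dvd_mod_diff)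
        have eq: "L 1 (Suc j) - L 1 1 - (\<Sum>k\<in>{1..<Suc j}. d k) = (L 1 j - L 1 1 - (\<Sum>k\<in>{1..<j}. d k)) - (d j - (L 1 (j+1) - L 1 j))"
          unfolding sm by simp
        show "int n dvd (L 1 (Suc j) - L 1 1 - (\<Sum>k\<in>{1..<Suc j}. d k))" unfolding eq by (rule dvd_diff[OF ih k])
      qed
    qed
  qed
  have SB: "1 \<le> i \<longrightarrow> i \<le> n \<longrightarrow> (\<forall>j\<in>{1..n}. int n dvd (L i j - L 1 j - (\<Sum>k\<in>{1..<i}. d' k)))" for i
  proof (induction i)
    case 0 then show ?case by simp
  next
    case (Suc i)
    show ?case
    proof (cases "i = 0")
      case True then show ?thesis by simp
    next
      case False
      show ?thesis
      proof (intro impI ballI)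
        fix j assume i: "Suc i \<le> n" and j: "j \<in> {1..n}"
        then have ih: "int n dvd (L i j - L 1 j - (\<Sum>k\<in>{1..<i}. d' k))" using Suc.IH False by auto
        have sm: "(\<Sum>k\<in>{1..<Suc i}. d' k) = (\<Sum>k\<in>{1..<i}. d' k) + d' i" using False by simp
        have k: "int n dvd (d' i - (L (i+1) 1 - L i 1))" unfolding d'_def diff_row_def by (rule dvd_mod_diff)
        have v: "int n dvd (L (i+1) j - L i j - (L (i+1) 1 - L i 1))" using vconst[of i j] i j False by auto
        have eq: "L (Suc i) j - L 1 j - (\<Sum>k\<in>{1..<Suc i}. d' k) = (L i j - L 1 j - (\<Sum>k\<in>{1..<i}. d' k))
            + (L (i+1) j - L i j - (L (i+1) 1 - L i 1)) - (d' i - (L (i+1) 1 - L i 1))"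
          unfolding sm by simp
        show "int n dvd (L (Suc i) j - L 1 j - (\<Sum>k\<in>{1..<Suc i}. d' k))" unfolding eq
          by (rule dvd_diff[OF dvd_add[OF ih v] k])
      qed
    qed
  qed
  have form: "L i j = (prod_mat n d d' i j - 1 + (L 1 1 - 1)) mod int n + 1" if "i \<in> {1..n}" "j \<in> {1..n}" for i j
  proof -
    define \<Sigma> where "\<Sigma> = (\<Sum>k\<in>{1..<i}. d' k) + (\<Sum>k\<in>{1..<j}. d k)"
    have a: "int n dvd (L 1 j - L 1 1 - (\<Sum>k\<in>{1..<j}. d k))" using SA[of j] that by auto
    have b: "int n dvd (L i j - L 1 j - (\<Sum>k\<in>{1..<i}. d' k))" using SB[of i] that by auto
    have c: "int n dvd (\<Sigma> mod int n - \<Sigma>)" by (rule dvd_mod_diff)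
    have eq: "(L i j - 1) - (\<Sigma> mod int n + L 1 1 - 1) = (L i j - L 1 j - (\<Sum>k\<in>{1..<i}. d' k)) + (L 1 j - L 1 1 - (\<Sum>k\<in>{1..<j}. d k)) - (\<Sigma> mod int n - \<Sigma>)"
      unfolding \<Sigma>_def by simp
    have "int n dvd ((L i j - 1) - (\<Sigma> mod int n + L 1 1 - 1))" unfolding eq
      by (rule dvd_diff[OF dvd_add[OF b a] c])
    then have "(L i j - 1) mod int n = (\<Sigma> mod int n + L 1 1 - 1) mod int n" by (simp add: mod_eq_dvd_iff)
    moreover have "(L i j - 1) mod int n = L i j - 1" using rng[OF that] by auto
    ultimately have "L i j = (\<Sigma> mod int n + L 1 1 - 1) mod int n + 1" by simp
    then show ?thesis unfolding prod_mat_def \<Sigma>_def by (simp add: add_diff_eq)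
  qed
  show ?thesis unfolding row_product_def using assms(3) dr dr' form by blast
qed

end
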